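(* Let ${\bf f}_1:\mathbb{R}^m\times\mathbb{R}_{\ge 0}\to\mathbb{R}^m$ and ${\bf f}_2:\mathbb{R}^m\times\mathbb{R}_{\ge 0}\to\mathbb{R}^m$ be continuously differentiable. Suppose both are contracting with identity metric, i.e. there is $\beta>0$ such that the symmetric parts of the Jacobians satisfy $\frac12\big(\frac{\partial {\bf f}_k}{\partial {\bf x}}+\frac{\partial {\bf f}_k}{\partial {\bf x}}^T\big)({\bf x},t)\le -\beta I$ for all ${\bf x},t$ and $k=1,2$; assume also that these Jacobians are uniformly bounded. Let ${\bf G}$ be a constant real $m\times p$ matrix, let $k_{12},k_{21}>0$ and let $T_{12},T_{21}\ge 0$ be constant delays. Consider the coupled delay system $$\dot{\bf x}_1(t)={\bf f}_1({\bf x}_1,t)+\tfrac{1}{k_{21}}{\bf G}{\bf G}^T\big({\bf x}_2(t-T_{21})-{\bf x}_1(t)\big),\qquad \dot{\bf x}_2(t)={\bf f}_2({\bf x}_2,t)+\tfrac{1}{k_{12}}{\bf G}{\bf G}^T\big({\bf x}_1(t-T_{12})-{\bf x}_2(t)\big),$$ with continuous initial functions on $[-\max(T_{12},T_{21}),0]$. Then the overall system is asymptotically contracting: for all values of the delays, any two solutions converge asymptotically to each other (all solutions converge to a single trajectory, independently of the initial conditions).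
   Context: A system is called asymptotically contracting if every virtual displacement (infinitesimal difference $\delta{\bf x}$ between neighboring solutions, $\delta{\bf x}=\frac{\partial {\bf x}}{\partial {\bf x}_o}d{\bf x}_o$ with respect to initial data) tends to zero as $t\to\infty$, which implies global asymptotic convergence of all solutions to a single trajectory. *)

theory Defs
  imports "HOL-Analysis.Analysis"
begin

definition sym_part :: "real^'m^'m \<Rightarrow> real^'m^'m" where
  "sym_part A = (1/2) *\<^sub>R (A + transpose A)"

definition C1_field ::
  "(real^'m \<Rightarrow> real \<Rightarrow> real^'m) \<Rightarrow> (real^'m \<Rightarrow> real \<Rightarrow> real^'m^'m)
     \<Rightarrow> (real^'m \<Rightarrow> real \<Rightarrow> real^'m) \<Rightarrow> bool" where
  "C1_field f J ft \<longleftrightarrow>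
     (\<forall>x t. t \<ge> 0 \<longrightarrow>
        ((\<lambda>z. f (fst z) (snd z)) has_derivative (\<lambda>(v, s). J x t *v v + s *\<^sub>R ft x t))
          (at (x, t) within UNIV \<times> {0..})) \<and>
     continuous_on (UNIV \<times> {0..}) (\<lambda>z. J (fst z) (snd z)) \<and>
     continuous_on (UNIV \<times> {0..}) (\<lambda>z. ft (fst z) (snd z))"

definition contracting_identity_metric ::
  "(real^'m \<Rightarrow> real \<Rightarrow> real^'m^'m) \<Rightarrow> real \<Rightarrow> bool" where
  "contracting_identity_metric J \<beta> \<longleftrightarrow>
     (\<forall>x t v. t \<ge> 0 \<longrightarrow> v \<bullet> (sym_part (J x t) *v v) \<le> - \<beta> * (v \<bullet> v))"

text \<open>A solution of the coupled delay system on [-max T12 T21, \<infinity>): continuous there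
  (its restriction to [-max T12 T21, 0] is the continuous initial function) and
  satisfying the delay ODE for all t \<ge> 0 (right derivative at t = 0).\<close>
definition coupled_solution ::
  "(real^'m \<Rightarrow> real \<Rightarrow> real^'m) \<Rightarrow> (real^'m \<Rightarrow> real \<Rightarrow> real^'m) \<Rightarrow> real^'p^'m
     \<Rightarrow> real \<Rightarrow> real \<Rightarrow> real \<Rightarrow> real \<Rightarrow> (real \<Rightarrow> real^'m) \<Rightarrow> (real \<Rightarrow> real^'m) \<Rightarrow> bool" where
  "coupled_solution f1 f2 G k12 k21 T12 T21 x1 x2 \<longleftrightarrow>
     continuous_on {- max T12 T21..} x1 \<and> continuous_on {- max T12 T21..} x2 \<and>
     (\<forall>t\<ge>0. (x1 has_vector_derivative
        (f1 (x1 t) t + (1 / k21) *\<^sub>R ((G ** transpose G) *v (x2 (t - T21) - x1 t))))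
        (at t within {0..})) \<and>
     (\<forall>t\<ge>0. (x2 has_vector_derivative
        (f2 (x2 t) t + (1 / k12) *\<^sub>R ((G ** transpose G) *v (x1 (t - T12) - x2 t))))
        (at t within {0..}))"

end

theory Submission
  imports Defs
begin

lemma scaleR_matrix_vector: "((c::real) *\<^sub>R (A::real^'n^'m)) *v v = c *\<^sub>R (A *v v)"
  by (simp add: vec_eq_iff matrix_vector_mult_def sum_distrib_left mult.assoc)

lemma sym_part_quad: "v \<bullet> (sym_part J *v v) = v \<bullet> (J *v v)"
proof -
  have "v \<bullet> (transpose J *v v) = v \<bullet> (J *v v)"
    by (metis dot_lmul_matrix inner_commute transpose_matrix_vector)
  then show ?thesis
    by (simp add: sym_part_def scaleR_matrix_vector matrix_vector_mult_add_rdistrib inner_add_right)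
qed

lemma contr_mono:
  fixes f :: "real^'m \<Rightarrow> real \<Rightarrow> real^'m"
  assumes C: "C1_field f J ft" and K: "contracting_identity_metric J \<beta>" and t: "t \<ge> 0"
  shows "(f x t - f y t) \<bullet> (x - y) \<le> - \<beta> * ((x - y) \<bullet> (x - y))"
proof -
  define d where "d = x - y"
  define g where "g s = f (y + s *\<^sub>R d) t \<bullet> d" for s :: real
  have D: "\<And>z. z \<in> UNIV \<times> {0..} \<Longrightarrow> ((\<lambda>z. f (fst z) (snd z)) has_derivative (\<lambda>(v, s). J (fst z) (snd z) *v v + s *\<^sub>R ft (fst z) (snd z))) (at z within UNIV \<times> {0..})"
    using C unfolding C1_field_def by auto
  have "(g has_real_derivative (J (y + s *\<^sub>R d) t *v d) \<bullet> d) (at s)" for s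
  proof -
    have p: "((\<lambda>s. (y + s *\<^sub>R d, t)) has_derivative (\<lambda>h. (h *\<^sub>R d, 0))) (at s within UNIV)"
      by (auto intro!: derivative_eq_intros)
    have "((\<lambda>s. f (fst (y + s *\<^sub>R d, t)) (snd (y + s *\<^sub>R d, t))) has_derivative
       (\<lambda>h. (\<lambda>(v, s'). J (fst (y + s *\<^sub>R d, t)) (snd (y + s *\<^sub>R d, t)) *v v + s' *\<^sub>R ft (fst (y + s *\<^sub>R d, t)) (snd (y + s *\<^sub>R d, t))) (h *\<^sub>R d, 0))) (at s within UNIV)"
      by (rule has_derivative_in_compose2[OF D _ _ p]) (use t in auto)
    then have "((\<lambda>s. f (y + s *\<^sub>R d) t) has_derivative (\<lambda>h. h *\<^sub>R (J (y + s *\<^sub>R d) t *v d))) (at s)"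
      by (simp add: matrix_vector_mult_scaleR)
    then have "((\<lambda>s. f (y + s *\<^sub>R d) t \<bullet> d) has_derivative (\<lambda>h. h *\<^sub>R (J (y + s *\<^sub>R d) t *v d) \<bullet> d)) (at s)"
      by (auto intro!: derivative_eq_intros)
    then show ?thesis unfolding g_def has_field_derivative_def
      by (simp add: mult_commute_abs)
  qed
  then obtain z where "g 1 - g 0 = (1 - 0) * ((J (y + z *\<^sub>R d) t *v d) \<bullet> d)"
    using MVT2[of 0 1 g "\<lambda>s. (J (y + s *\<^sub>R d) t *v d) \<bullet> d"] by auto
  moreover have "(J (y + z *\<^sub>R d) t *v d) \<bullet> d \<le> - \<beta> * (d \<bullet> d)"
    using K t unfolding contracting_identity_metric_def
    by (metis sym_part_quad inner_commute)
  moreover have "g 1 - g 0 = (f x t - f y t) \<bullet> d"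
    by (simp add: g_def d_def inner_diff_left)
  ultimately show ?thesis by (simp add: d_def)
qed

lemma vd_at: "(f has_vector_derivative D) (at t within {0..}) \<Longrightarrow> t > 0 \<Longrightarrow> (f has_vector_derivative D) (at t)"
proof -
  assume a: "(f has_vector_derivative D) (at t within {0..})" "t > 0"
  have "at t within {0..} = at t"
    by (rule at_within_open_subset[of t "{0<..}"]) (use a in auto)
  then show ?thesis using a by simp
qed

lemma quad_deriv:
  fixes e :: "real \<Rightarrow> real^'m"
  assumes "(e has_vector_derivative D) (at t)"
  shows "((\<lambda>t. e t \<bullet> e t) has_real_derivative 2 * (e t \<bullet> D)) (at t)"
proof -
  have h: "(e has_derivative (\<lambda>h. h *\<^sub>R D)) (at t)" using assms unfolding has_vector_derivative_def .
  then show ?thesis using has_derivative_inner[OF h h] unfolding has_field_derivative_def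
    by (simp add: inner_commute algebra_simps mult_commute_abs)
qed

lemma int_deriv:
  fixes q :: "real \<Rightarrow> real"
  assumes "continuous_on {A..} q" "A < s"
  shows "((\<lambda>t. integral {A..t} q) has_real_derivative q s) (at s)"
proof -
  have "continuous_on {A..s+1} q" using assms(1) by (rule continuous_on_subset) auto
  then have "((\<lambda>t. integral {A..t} q) has_real_derivative q s) (at s within {A..s+1})"
    by (rule integral_has_real_derivative) (use assms in auto)
  moreover have "at s within {A..s+1} = at s"
    by (rule at_within_open_subset[of s "{A<..<s+1}"]) (use assms in auto)
  ultimately show ?thesis by simp
qed

lemma M_inner: "(x::real^'m) \<bullet> ((G ** transpose G) *v w) = (transpose G *v x) \<bullet> (transpose G *v w)"
  by (metis dot_lmul_matrix matrix_vector_mul_assoc transpose_matrix_vector)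

lemma key_alg:
  fixes a b c d :: "real^'n"
  shows "2*(a\<bullet>b) - 2*(a\<bullet>a) + 2*(c\<bullet>d) - 2*(c\<bullet>c) + (c\<bullet>c) - (b\<bullet>b) + (a\<bullet>a) - (d\<bullet>d) \<le> 0"
proof -
  have "2*(a\<bullet>b) - 2*(a\<bullet>a) + 2*(c\<bullet>d) - 2*(c\<bullet>c) + (c\<bullet>c) - (b\<bullet>b) + (a\<bullet>a) - (d\<bullet>d)
     = - ((a-b)\<bullet>(a-b)) - ((c-d)\<bullet>(c-d))"
    by (simp add: inner_diff_left inner_diff_right inner_commute[of b a] inner_commute[of d c])
  then show ?thesis using inner_ge_zero[of "a-b"] inner_ge_zero[of "c-d"] by linarith
qed

lemma int_diff_nonneg:
  fixes q :: "real \<Rightarrow> real"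
  assumes "continuous_on {A..} q" "\<And>s. s \<ge> A \<Longrightarrow> q s \<ge> 0" "A \<le> t - T" "T \<ge> 0"
  shows "integral {A..t - T} q \<le> integral {A..t} q"
proof -
  have int: "q integrable_on {A..t}"
    by (rule integrable_continuous_interval, rule continuous_on_subset[OF assms(1)]) auto
  have "integral {A..t - T} q + integral {t - T..t} q = integral {A..t} q"
    by (rule Henstock_Kurzweil_Integration.integral_combine[OF assms(3) _ int]) (use assms in auto)
  moreover have "integral {t - T..t} q \<ge> 0"
    by (rule integral_nonneg, rule integrable_on_subinterval[OF int]) (use assms in auto)
  ultimately show ?thesis by linarith
qed

theorem theorem1:
  fixes f1 f2 :: "real^'m \<Rightarrow> real \<Rightarrow> real^'m"
    and J1 J2 :: "real^'m \<Rightarrow> real \<Rightarrow> real^'m^'m"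
    and ft1 ft2 :: "real^'m \<Rightarrow> real \<Rightarrow> real^'m"
    and G :: "real^'p^'m"
    and \<beta> k12 k21 T12 T21 :: real
  assumes C1_1: "C1_field f1 J1 ft1"
    and C1_2: "C1_field f2 J2 ft2"
    and beta_pos: "\<beta> > 0"
    and contr1: "contracting_identity_metric J1 \<beta>"
    and contr2: "contracting_identity_metric J2 \<beta>"
    and bounded_J: "\<exists>B. \<forall>x t. t \<ge> 0 \<longrightarrow> norm (J1 x t) \<le> B \<and> norm (J2 x t) \<le> B"
    and k_pos: "k12 > 0" "k21 > 0"
    and T_nonneg: "T12 \<ge> 0" "T21 \<ge> 0"
    and sol_x: "coupled_solution f1 f2 G k12 k21 T12 T21 x1 x2"
    and sol_y: "coupled_solution f1 f2 G k12 k21 T12 T21 y1 y2"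
  shows "((\<lambda>t. norm (x1 t - y1 t) + norm (x2 t - y2 t)) \<longlongrightarrow> 0) at_top"
proof -
  define M where "M = G ** transpose G"
  define A where "A = - max T12 T21"
  define e1 where "e1 t = x1 t - y1 t" for t
  define e2 where "e2 t = x2 t - y2 t" for t
  define h where "h v = transpose G *v v" for v
  define fd1 where "fd1 t = f1 (x1 t) t - f1 (y1 t) t" for t
  define fd2 where "fd2 t = f2 (x2 t) t - f2 (y2 t) t" for t
  define D1 where "D1 t = fd1 t + (1/k21) *\<^sub>R (M *v (e2 (t - T21) - e1 t))" for t
  define D2 where "D2 t = fd2 t + (1/k12) *\<^sub>R (M *v (e1 (t - T12) - e2 t))" for t
  have A_le: "A \<le> 0" "A \<le> - T12" "A \<le> - T21" using T_nonneg by (auto simp: A_def)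
  note sx = sol_x[unfolded coupled_solution_def M_def[symmetric] A_def[symmetric]]
  note sy = sol_y[unfolded coupled_solution_def M_def[symmetric] A_def[symmetric]]
  have ce1: "continuous_on {A..} e1" unfolding e1_def using sx sy by (intro continuous_on_diff) auto
  have ce2: "continuous_on {A..} e2" unfolding e2_def using sx sy by (intro continuous_on_diff) auto
  have de1: "(e1 has_vector_derivative D1 t) (at t)" if "t > 0" for t
  proof -
    have "(x1 has_vector_derivative (f1 (x1 t) t + (1 / k21) *\<^sub>R (M *v (x2 (t - T21) - x1 t)))) (at t)"
      using sx that by (intro vd_at) auto
    moreover have "(y1 has_vector_derivative (f1 (y1 t) t + (1 / k21) *\<^sub>R (M *v (y2 (t - T21) - y1 t)))) (at t)"
      using sy that by (intro vd_at) auto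
    ultimately have "(e1 has_vector_derivative (f1 (x1 t) t + (1 / k21) *\<^sub>R (M *v (x2 (t - T21) - x1 t))) - (f1 (y1 t) t + (1 / k21) *\<^sub>R (M *v (y2 (t - T21) - y1 t)))) (at t)"
      unfolding e1_def[abs_def] by (rule has_vector_derivative_diff)
    moreover have "(f1 (x1 t) t + (1 / k21) *\<^sub>R (M *v (x2 (t - T21) - x1 t))) - (f1 (y1 t) t + (1 / k21) *\<^sub>R (M *v (y2 (t - T21) - y1 t))) = D1 t"
      by (simp add: D1_def fd1_def e1_def e2_def matrix_vector_mult_diff_distrib algebra_simps)
    ultimately show ?thesis by simp
  qed
  have de2: "(e2 has_vector_derivative D2 t) (at t)" if "t > 0" for t
  proof -
    have "(x2 has_vector_derivative (f2 (x2 t) t + (1 / k12) *\<^sub>R (M *v (x1 (t - T12) - x2 t)))) (at t)"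
      using sx that by (intro vd_at) auto
    moreover have "(y2 has_vector_derivative (f2 (y2 t) t + (1 / k12) *\<^sub>R (M *v (y1 (t - T12) - y2 t)))) (at t)"
      using sy that by (intro vd_at) auto
    ultimately have "(e2 has_vector_derivative (f2 (x2 t) t + (1 / k12) *\<^sub>R (M *v (x1 (t - T12) - x2 t))) - (f2 (y2 t) t + (1 / k12) *\<^sub>R (M *v (y1 (t - T12) - y2 t)))) (at t)"
      unfolding e2_def[abs_def] by (rule has_vector_derivative_diff)
    moreover have "(f2 (x2 t) t + (1 / k12) *\<^sub>R (M *v (x1 (t - T12) - x2 t))) - (f2 (y2 t) t + (1 / k12) *\<^sub>R (M *v (y1 (t - T12) - y2 t))) = D2 t"
      by (simp add: D2_def fd2_def e1_def e2_def matrix_vector_mult_diff_distrib algebra_simps)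
    ultimately show ?thesis by simp
  qed
  have fd1_le: "fd1 t \<bullet> e1 t \<le> - \<beta> * (e1 t \<bullet> e1 t)" if "t \<ge> 0" for t
    unfolding fd1_def e1_def by (rule contr_mono[OF C1_1 contr1 that])
  have fd2_le: "fd2 t \<bullet> e2 t \<le> - \<beta> * (e2 t \<bullet> e2 t)" if "t \<ge> 0" for t
    unfolding fd2_def e2_def by (rule contr_mono[OF C1_2 contr2 that])
  have hlin: "bounded_linear h" unfolding h_def[abs_def] by (rule matrix_vector_mul_bounded_linear)
  have hdiff: "h (v - w) = h v - h w" for v w by (simp add: h_def matrix_vector_mult_diff_distrib)
  have Mh: "v \<bullet> (M *v w) = h v \<bullet> h w" for v w unfolding M_def h_def by (rule M_inner)
  define q1 where "q1 s = h (e1 s) \<bullet> h (e1 s)" for s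
  define q2 where "q2 s = h (e2 s) \<bullet> h (e2 s)" for s
  have cq1: "continuous_on {A..} q1" unfolding q1_def
    by (intro continuous_on_inner continuous_on_compose2[OF linear_continuous_on[OF hlin] ce1]) auto
  have cq2: "continuous_on {A..} q2" unfolding q2_def
    by (intro continuous_on_inner continuous_on_compose2[OF linear_continuous_on[OF hlin] ce2]) auto
  define P1 where "P1 t = integral {A..t} q1" for t
  define P2 where "P2 t = integral {A..t} q2" for t
  define W where "W t = k21 * (e1 t \<bullet> e1 t) + k12 * (e2 t \<bullet> e2 t) + (P2 t - P2 (t - T21)) + (P1 t - P1 (t - T12))" for t
  define W' where "W' t = k21 * (2 * (e1 t \<bullet> D1 t)) + k12 * (2 * (e2 t \<bullet> D2 t)) + (q2 t - q2 (t - T21)) + (q1 t - q1 (t - T12))" for t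

  have dW: "(W has_real_derivative W' t) (at t)" if t: "t > 0" for t
  proof -
    have i1: "(P1 has_real_derivative q1 s) (at s)" if "A < s" for s
      unfolding P1_def[abs_def] by (rule int_deriv[OF cq1 that])
    have i2: "(P2 has_real_derivative q2 s) (at s)" if "A < s" for s
      unfolding P2_def[abs_def] by (rule int_deriv[OF cq2 that])
    have s1: "((\<lambda>t. t - T12) has_real_derivative 1) (at t)" by (auto intro!: derivative_eq_intros)
    have s2: "((\<lambda>t. t - T21) has_real_derivative 1) (at t)" by (auto intro!: derivative_eq_intros)
    have j1: "((\<lambda>t. P1 (t - T12)) has_real_derivative q1 (t - T12)) (at t)"
      using DERIV_chain2[OF i1 s1] t A_le by simp
    have j2: "((\<lambda>t. P2 (t - T21)) has_real_derivative q2 (t - T21)) (at t)"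
      using DERIV_chain2[OF i2 s2] t A_le by simp
    have n1: "((\<lambda>t. e1 t \<bullet> e1 t) has_real_derivative 2 * (e1 t \<bullet> D1 t)) (at t)"
      by (rule quad_deriv[OF de1[OF t]])
    have n2: "((\<lambda>t. e2 t \<bullet> e2 t) has_real_derivative 2 * (e2 t \<bullet> D2 t)) (at t)"
      by (rule quad_deriv[OF de2[OF t]])
    have "((\<lambda>t. k21 * (e1 t \<bullet> e1 t) + k12 * (e2 t \<bullet> e2 t) + (P2 t - P2 (t - T21)) + (P1 t - P1 (t - T12))) has_real_derivative W' t) (at t)"
      unfolding W'_def
      by (intro DERIV_add DERIV_diff DERIV_cmult n1 n2 j1 j2 i1 i2) (use t A_le in auto)
    then show ?thesis unfolding W_def[abs_def] .
  qed
  have a1: "k21 * (2 * (e1 t \<bullet> D1 t)) = 2 * k21 * (fd1 t \<bullet> e1 t) + 2 * (h (e1 t) \<bullet> h (e2 (t - T21))) - 2 * (h (e1 t) \<bullet> h (e1 t))" for t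
    using k_pos by (simp add: D1_def inner_add_right Mh hdiff inner_diff_right inner_commute algebra_simps)
  have a2: "k12 * (2 * (e2 t \<bullet> D2 t)) = 2 * k12 * (fd2 t \<bullet> e2 t) + 2 * (h (e2 t) \<bullet> h (e1 (t - T12))) - 2 * (h (e2 t) \<bullet> h (e2 t))" for t
    using k_pos by (simp add: D2_def inner_add_right Mh hdiff inner_diff_right inner_commute algebra_simps)
  have W'_le: "W' t \<le> - 2 * \<beta> * (k21 * (e1 t \<bullet> e1 t) + k12 * (e2 t \<bullet> e2 t))" if t: "t > 0" for t
  proof -
    have "W' t = 2 * k21 * (fd1 t \<bullet> e1 t) + 2 * k12 * (fd2 t \<bullet> e2 t) +
       (2*(h (e1 t)\<bullet>h (e2 (t - T21))) - 2*(h (e1 t)\<bullet>h (e1 t)) + 2*(h (e2 t)\<bullet>h (e1 (t - T12))) - 2*(h (e2 t)\<bullet>h (e2 t))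
        + (h (e2 t)\<bullet>h (e2 t)) - (h (e2 (t - T21))\<bullet>h (e2 (t - T21))) + (h (e1 t)\<bullet>h (e1 t)) - (h (e1 (t - T12))\<bullet>h (e1 (t - T12))))"
      unfolding W'_def a1 a2 q1_def q2_def by simp
    also have "\<dots> \<le> 2 * k21 * (fd1 t \<bullet> e1 t) + 2 * k12 * (fd2 t \<bullet> e2 t)"
      using key_alg[of "h (e1 t)" "h (e2 (t - T21))" "h (e2 t)" "h (e1 (t - T12))"] by linarith
    also have "\<dots> \<le> 2 * k21 * (- \<beta> * (e1 t \<bullet> e1 t)) + 2 * k12 * (- \<beta> * (e2 t \<bullet> e2 t))"
      using fd1_le[of t] fd2_le[of t] t k_pos by (intro add_mono mult_left_mono) auto
    finally show ?thesis by (simp add: algebra_simps)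
  qed

  have q1_nn: "q1 s \<ge> 0" for s unfolding q1_def by simp
  have q2_nn: "q2 s \<ge> 0" for s unfolding q2_def by simp
  have W_ge: "k21 * (e1 t \<bullet> e1 t) + k12 * (e2 t \<bullet> e2 t) \<le> W t" if "t \<ge> 0" for t
  proof -
    have "P1 (t - T12) \<le> P1 t" unfolding P1_def
      by (rule int_diff_nonneg[OF cq1 q1_nn]) (use that A_le T_nonneg in auto)
    moreover have "P2 (t - T21) \<le> P2 t" unfolding P2_def
      by (rule int_diff_nonneg[OF cq2 q2_nn]) (use that A_le T_nonneg in auto)
    ultimately show ?thesis unfolding W_def by linarith
  qed
  have W_nn: "W t \<ge> 0" if "t \<ge> 0" for t
  proof -
    have "0 \<le> k21 * (e1 t \<bullet> e1 t)" "0 \<le> k12 * (e2 t \<bullet> e2 t)" using k_pos by auto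
    then show ?thesis using W_ge[OF that] by linarith
  qed
  have W'_nonpos: "W' t \<le> 0" if "t > 0" for t
  proof -
    have "0 \<le> k21 * (e1 t \<bullet> e1 t) + k12 * (e2 t \<bullet> e2 t)" using k_pos by auto
    then have "0 \<le> 2 * \<beta> * (k21 * (e1 t \<bullet> e1 t) + k12 * (e2 t \<bullet> e2 t))" using beta_pos by auto
    then show ?thesis using W'_le[OF that] by linarith
  qed
  have W_mono: "W b \<le> W a" if "0 < a" "a \<le> b" for a b
  proof (cases "a = b")
    case False
    then have "a < b" using that by simp
    have "\<And>x. a \<le> x \<Longrightarrow> x \<le> b \<Longrightarrow> (W has_real_derivative W' x) (at x)"
      using dW that by auto
    then obtain z where "a < z" "z < b" "W b - W a = (b - a) * W' z"
      using MVT2[OF \<open>a < b\<close>] by blast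
    moreover have "W' z \<le> 0" using W'_nonpos \<open>a < z\<close> that by simp
    moreover have "(b - a) * W' z \<le> 0" using mult_nonneg_nonpos[of "b-a" "W' z"] \<open>a < b\<close> \<open>W' z \<le> 0\<close> by simp
    ultimately show ?thesis by linarith
  qed simp

  have ebound: "\<exists>K>0. \<forall>s\<ge>A. norm (e s) \<le> K"
    if ce: "continuous_on {A..} e" and kp: "k > 0" and eW: "\<And>t. t \<ge> 1 \<Longrightarrow> k * (e t \<bullet> e t) \<le> W 1" for e :: "real \<Rightarrow> real^'m" and k
  proof -
    have "compact (e ` {A..1})"
      by (rule compact_continuous_image, rule continuous_on_subset[OF ce]) auto
    then obtain B where B: "B > 0" "\<forall>x\<in>e ` {A..1}. norm x \<le> B"
      using compact_imp_bounded bounded_pos by metis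
    have sq: "sqrt (W 1 / k) \<ge> 0" using W_nn[of 1] kp by simp
    have "norm (e s) \<le> B + sqrt (W 1 / k)" if "s \<ge> A" for s
    proof (cases "s \<le> 1")
      case True
      then have "norm (e s) \<le> B" using B that by auto
      then show ?thesis using sq by linarith
    next
      case False
      then have "e s \<bullet> e s \<le> W 1 / k" using eW[of s] kp by (simp add: field_simps mult.commute)
      then have "sqrt (e s \<bullet> e s) \<le> sqrt (W 1 / k)" by (rule real_sqrt_le_mono)
      then have "norm (e s) \<le> sqrt (W 1 / k)" by (simp add: norm_eq_sqrt_inner)
      then show ?thesis using B by simp
    qed
    moreover have "B + sqrt (W 1 / k) > 0" using B(1) sq by linarith
    ultimately show ?thesis by blast
  qed
  have W1: "W t \<le> W 1" if "t \<ge> 1" for t using W_mono[of 1 t] that by simp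
  obtain K1 where K1: "K1 > 0" "\<forall>s\<ge>A. norm (e1 s) \<le> K1"
  proof -
    have "\<And>t. t \<ge> 1 \<Longrightarrow> k21 * (e1 t \<bullet> e1 t) \<le> W 1"
    proof -
      fix t :: real assume "t \<ge> 1"
      have "0 \<le> k12 * (e2 t \<bullet> e2 t)" using k_pos by auto
      then show "k21 * (e1 t \<bullet> e1 t) \<le> W 1" using W_ge[of t] W1[of t] \<open>t \<ge> 1\<close> by linarith
    qed
    then show ?thesis using that ebound[OF ce1 k_pos(2)] by blast
  qed
  obtain K2 where K2: "K2 > 0" "\<forall>s\<ge>A. norm (e2 s) \<le> K2"
  proof -
    have "\<And>t. t \<ge> 1 \<Longrightarrow> k12 * (e2 t \<bullet> e2 t) \<le> W 1"
    proof -
      fix t :: real assume "t \<ge> 1"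
      have "0 \<le> k21 * (e1 t \<bullet> e1 t)" using k_pos by auto
      then show "k12 * (e2 t \<bullet> e2 t) \<le> W 1" using W_ge[of t] W1[of t] \<open>t \<ge> 1\<close> by linarith
    qed
    then show ?thesis using that ebound[OF ce2 k_pos(1)] by blast
  qed
  obtain Kh where Kh: "Kh > 0" "\<And>v. norm (h v) \<le> norm v * Kh"
    using bounded_linear.pos_bounded[OF hlin] by blast
  define K where "K = max K1 K2 * Kh"
  have K_pos: "K > 0" using K1 K2 Kh by (simp add: K_def)
  have hb1: "norm (h (e1 s)) \<le> K" if "s \<ge> A" for s
  proof -
    have "norm (h (e1 s)) \<le> norm (e1 s) * Kh" by (rule Kh(2))
    also have "\<dots> \<le> max K1 K2 * Kh" using K1 that Kh by (intro mult_right_mono) auto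
    finally show ?thesis by (simp add: K_def)
  qed
  have hb2: "norm (h (e2 s)) \<le> K" if "s \<ge> A" for s
  proof -
    have "norm (h (e2 s)) \<le> norm (e2 s) * Kh" by (rule Kh(2))
    also have "\<dots> \<le> max K1 K2 * Kh" using K2 that Kh by (intro mult_right_mono) auto
    finally show ?thesis by (simp add: K_def)
  qed
  have hprod: "h v \<bullet> h w \<le> K * K" if "norm (h v) \<le> K" "norm (h w) \<le> K" for v w
  proof -
    have "h v \<bullet> h w \<le> norm (h v) * norm (h w)" by (rule norm_cauchy_schwarz)
    also have "\<dots> \<le> K * K" using that K_pos by (intro mult_mono) auto
    finally show ?thesis .
  qed
  have D1b: "2 * (e1 t \<bullet> D1 t) \<le> 2 * (K * K) / k21" if "t > 0" for t
  proof -
    have "0 \<le> \<beta> * (e1 t \<bullet> e1 t)" using beta_pos by simp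
    then have "fd1 t \<bullet> e1 t \<le> 0" using fd1_le[of t] that by linarith
    then have "2 * k21 * (fd1 t \<bullet> e1 t) \<le> 0" using k_pos by (simp add: mult_nonneg_nonpos)
    moreover have "h (e1 t) \<bullet> h (e2 (t - T21)) \<le> K * K"
      using that A_le by (intro hprod hb1 hb2) auto
    moreover have "0 \<le> h (e1 t) \<bullet> h (e1 t)" by simp
    ultimately have "k21 * (2 * (e1 t \<bullet> D1 t)) \<le> 2 * (K * K)"
      unfolding a1 by linarith
    then show ?thesis using k_pos by (simp add: field_simps mult.commute)
  qed
  have D2b: "2 * (e2 t \<bullet> D2 t) \<le> 2 * (K * K) / k12" if "t > 0" for t
  proof -
    have "0 \<le> \<beta> * (e2 t \<bullet> e2 t)" using beta_pos by simp
    then have "fd2 t \<bullet> e2 t \<le> 0" using fd2_le[of t] that by linarith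
    then have "2 * k12 * (fd2 t \<bullet> e2 t) \<le> 0" using k_pos by (simp add: mult_nonneg_nonpos)
    moreover have "h (e2 t) \<bullet> h (e1 (t - T12)) \<le> K * K"
      using that A_le by (intro hprod hb1 hb2) auto
    moreover have "0 \<le> h (e2 t) \<bullet> h (e2 t)" by simp
    ultimately have "k12 * (2 * (e2 t \<bullet> D2 t)) \<le> 2 * (K * K)"
      unfolding a2 by linarith
    then show ?thesis using k_pos by (simp add: field_simps mult.commute)
  qed

  define u where "u t = e1 t \<bullet> e1 t + e2 t \<bullet> e2 t" for t
  define U' where "U' t = 2 * (e1 t \<bullet> D1 t) + 2 * (e2 t \<bullet> D2 t)" for t
  define L where "L = 2 * (K * K) / k21 + 2 * (K * K) / k12"
  define c where "c = 2 * \<beta> * min k21 k12"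
  have L_pos: "L > 0" unfolding L_def using K_pos k_pos by (intro add_pos_pos divide_pos_pos mult_pos_pos) auto
  have c_pos: "c > 0" using beta_pos k_pos by (simp add: c_def)
  have u_nn: "u t \<ge> 0" for t by (simp add: u_def)
  have du: "(u has_real_derivative U' t) (at t)" if "t > 0" for t
    unfolding u_def[abs_def] U'_def
    by (intro DERIV_add quad_deriv de1 de2 that)
  have U'_le: "U' t \<le> L" if "t > 0" for t
    using D1b[OF that] D2b[OF that] by (simp add: U'_def L_def)
  have W'_c: "W' t \<le> - c * u t" if "t > 0" for t
  proof -
    have "min k21 k12 * (e1 t \<bullet> e1 t) \<le> k21 * (e1 t \<bullet> e1 t)" by (intro mult_right_mono) auto
    moreover have "min k21 k12 * (e2 t \<bullet> e2 t) \<le> k12 * (e2 t \<bullet> e2 t)" by (intro mult_right_mono) auto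
    ultimately have "min k21 k12 * u t \<le> k21 * (e1 t \<bullet> e1 t) + k12 * (e2 t \<bullet> e2 t)"
      by (simp add: u_def distrib_left)
    then have "2 * \<beta> * (min k21 k12 * u t) \<le> 2 * \<beta> * (k21 * (e1 t \<bullet> e1 t) + k12 * (e2 t \<bullet> e2 t))"
      using beta_pos by (intro mult_left_mono) auto
    then show ?thesis using W'_le[OF that] by (simp add: c_def algebra_simps)
  qed
  have key: "c * (b - a) * (u b - (b - a) * L) \<le> W a - W b" if ab: "1 \<le> a" "a < b" for a b
  proof -
    have "\<And>x. a \<le> x \<Longrightarrow> x \<le> b \<Longrightarrow> (W has_real_derivative W' x) (at x)"
      using dW ab by auto
    then obtain z where z: "a < z" "z < b" "W b - W a = (b - a) * W' z"
      using MVT2[OF \<open>a < b\<close>] by blast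
    have "\<And>x. z \<le> x \<Longrightarrow> x \<le> b \<Longrightarrow> (u has_real_derivative U' x) (at x)"
      using du ab z by auto
    then obtain z2 where z2: "z < z2" "z2 < b" "u b - u z = (b - z) * U' z2"
      using MVT2[OF \<open>z < b\<close>] by blast
    have "(b - z) * U' z2 \<le> (b - z) * L" using U'_le[of z2] z z2 ab by (intro mult_left_mono) auto
    also have "\<dots> \<le> (b - a) * L" using L_pos z by (intro mult_right_mono) auto
    finally have uz: "u b - (b - a) * L \<le> u z" using z2 by linarith
    have "c * (b - a) * (u b - (b - a) * L) \<le> c * (b - a) * u z"
      using uz c_pos ab by (intro mult_left_mono) auto
    also have "\<dots> \<le> (b - a) * (- W' z)"
    proof -
      have "c * u z \<le> - W' z" using W'_c[of z] z ab by simp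
      then have "(b - a) * (c * u z) \<le> (b - a) * (- W' z)" using ab by (intro mult_left_mono) auto
      then show ?thesis by (simp add: algebra_simps)
    qed
    also have "\<dots> = W a - W b" using z(3) by (simp add: algebra_simps)
    finally show ?thesis .
  qed
  define Wl where "Wl = Inf (W ` {1..})"
  have bdd: "bdd_below (W ` {1..})"
  proof (rule bdd_belowI)
    fix x assume "x \<in> W ` {1..}"
    then obtain t where "t \<ge> 1" "x = W t" by auto
    then show "0 \<le> x" using W_nn[of t] by simp
  qed
  have Wl_le: "Wl \<le> W t" if "t \<ge> 1" for t unfolding Wl_def by (rule cInf_lower[OF _ bdd]) (use that in simp)
  have u_lim: "(u \<longlongrightarrow> 0) at_top"
  proof (rule tendstoI)
    fix \<epsilon> :: real assume ep: "\<epsilon> > 0"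
    define \<delta> where "\<delta> = \<epsilon> / (2 * L)"
    have d_pos: "\<delta> > 0" using ep L_pos by (simp add: \<delta>_def)
    define \<epsilon>' where "\<epsilon>' = c * \<delta> * (\<epsilon> / 2)"
    have e'_pos: "\<epsilon>' > 0" using c_pos d_pos ep by (simp add: \<epsilon>'_def)
    have "Inf (W ` {1..}) < Wl + \<epsilon>'" using e'_pos by (simp add: Wl_def)
    then obtain t1 where t1: "t1 \<ge> 1" "W t1 < Wl + \<epsilon>'"
      using cInf_less_iff[OF _ bdd] by auto
    have "u b < \<epsilon>" if b: "b \<ge> t1 + \<delta>" for b
    proof -
      have "W (b - \<delta>) \<le> W t1" using W_mono[of t1 "b - \<delta>"] t1 b by simp
      moreover have "Wl \<le> W b" using Wl_le[of b] t1 b d_pos by simp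
      ultimately have "W (b - \<delta>) - W b < \<epsilon>'" using t1 by linarith
      moreover have "c * (b - (b - \<delta>)) * (u b - (b - (b - \<delta>)) * L) \<le> W (b - \<delta>) - W b"
        using t1 b d_pos by (intro key) auto
      ultimately have "c * \<delta> * (u b - \<delta> * L) < c * \<delta> * (\<epsilon> / 2)" unfolding \<epsilon>'_def by simp
      then have "u b - \<delta> * L < \<epsilon> / 2" using c_pos d_pos by (simp add: mult_less_cancel_left_pos)
      moreover have "\<delta> * L = \<epsilon> / 2" using L_pos by (simp add: \<delta>_def)
      ultimately show ?thesis by linarith
    qed
    then show "\<forall>\<^sub>F t in at_top. dist (u t) 0 < \<epsilon>"
      unfolding eventually_at_top_linorder using u_nn by (auto simp: dist_real_def)
  qed
  have sq_lim: "((\<lambda>t. 2 * sqrt (u t)) \<longlongrightarrow> 0) at_top"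
    using tendsto_mult[OF tendsto_const tendsto_real_sqrt[OF u_lim], of 2] by simp
  show ?thesis
  proof (rule tendsto_sandwich[OF _ _ tendsto_const sq_lim])
    show "\<forall>\<^sub>F t in at_top. 0 \<le> norm (x1 t - y1 t) + norm (x2 t - y2 t)" by simp
    have "norm (x1 t - y1 t) + norm (x2 t - y2 t) \<le> 2 * sqrt (u t)" for t
    proof -
      have "norm (e1 t) = sqrt (e1 t \<bullet> e1 t)" by (simp add: norm_eq_sqrt_inner)
      also have "\<dots> \<le> sqrt (u t)" by (rule real_sqrt_le_mono) (simp add: u_def)
      finally have 1: "norm (e1 t) \<le> sqrt (u t)" .
      have "norm (e2 t) = sqrt (e2 t \<bullet> e2 t)" by (simp add: norm_eq_sqrt_inner)
      also have "\<dots> \<le> sqrt (u t)" by (rule real_sqrt_le_mono) (simp add: u_def)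
      finally have 2: "norm (e2 t) \<le> sqrt (u t)" .
      show ?thesis using 1 2 by (simp add: e1_def e2_def)
    qed
    then show "\<forall>\<^sub>F t in at_top. norm (x1 t - y1 t) + norm (x2 t - y2 t) \<le> 2 * sqrt (u t)" by simp
  qed
qed

end
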